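(* Let $k\ge2$ and define $n_0(k)=2k+1$ for $k\ge3$ and $n_0(2)=6$. Then $\chi_D(LG_1(k,n))=3$ for all $n\ge n_0(k)$.
   Context: For integers $n,k$ with $2k<n$, $LG_1(k,n)$ is the bipartite graph with parts $L=\binom{[n]}{k-1}$ (the $(k-1)$-subsets of $[n]$) and $R=\binom{[n]}{k}$ (the $k$-subsets of $[n]$), where $u\in L$ and $v\in R$ are adjacent iff $u\subset v$. A coloring is distinguishing if the only graph automorphism mapping every color class onto itself is the identity; $\chi_D(G)$ is the minimum number of colors of a proper distinguishing coloring of $G$. *)

theory Defs
  imports Main
begin

definition is_automorphism :: "'v set \<Rightarrow> ('v \<Rightarrow> 'v \<Rightarrow> bool) \<Rightarrow> ('v \<Rightarrow> 'v) \<Rightarrow> bool" where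
  "is_automorphism V E f \<longleftrightarrow> bij_betw f V V \<and>
     (\<forall>u\<in>V. \<forall>v\<in>V. E (f u) (f v) \<longleftrightarrow> E u v)"

definition proper_coloring :: "'v set \<Rightarrow> ('v \<Rightarrow> 'v \<Rightarrow> bool) \<Rightarrow> ('v \<Rightarrow> nat) \<Rightarrow> bool" where
  "proper_coloring V E c \<longleftrightarrow> (\<forall>u\<in>V. \<forall>v\<in>V. E u v \<longrightarrow> c u \<noteq> c v)"

definition distinguishing :: "'v set \<Rightarrow> ('v \<Rightarrow> 'v \<Rightarrow> bool) \<Rightarrow> ('v \<Rightarrow> nat) \<Rightarrow> bool" where
  "distinguishing V E c \<longleftrightarrow>
     (\<forall>f. is_automorphism V E f \<and> (\<forall>i. f ` {v\<in>V. c v = i} = {v\<in>V. c v = i})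
          \<longrightarrow> (\<forall>v\<in>V. f v = v))"

definition chi_D :: "'v set \<Rightarrow> ('v \<Rightarrow> 'v \<Rightarrow> bool) \<Rightarrow> nat" where
  "chi_D V E = (LEAST m. \<exists>c. c ` V \<subseteq> {..<m} \<and> proper_coloring V E c \<and> distinguishing V E c)"

definition LG1_V :: "nat \<Rightarrow> nat \<Rightarrow> (nat set + nat set) set" where
  "LG1_V k n = Inl ` {A. A \<subseteq> {1..n} \<and> card A = k - 1} \<union> Inr ` {B. B \<subseteq> {1..n} \<and> card B = k}"

fun LG1_E :: "(nat set + nat set) \<Rightarrow> (nat set + nat set) \<Rightarrow> bool" where
  "LG1_E (Inl A) (Inr B) = (A \<subset> B)"
| "LG1_E (Inr B) (Inl A) = (A \<subset> B)"
| "LG1_E _ _ = False"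

end

theory Submission
  imports Defs
begin


definition gadj :: "nat \<Rightarrow> nat \<Rightarrow> nat \<Rightarrow> bool" where
 "gadj N x y \<longleftrightarrow> x \<in> {1..N} \<and> y \<in> {1..N} \<and> (y = Suc x \<or> x = Suc y \<or> {x,y} = {1,N} \<or> {x,y} = {1,3} \<or> {x,y} = {1,4})"

lemma gadj_sym: "gadj N x y = gadj N y x"
  unfolding gadj_def by (auto simp: insert_commute)

definition nb :: "nat \<Rightarrow> nat \<Rightarrow> nat set" where
 "nb N x = {y \<in> {1..N}. gadj N x y}"

lemma nb1: "6 \<le> N \<Longrightarrow> nb N 1 = {2,3,4,N}"
  unfolding nb_def gadj_def by (auto simp: doubleton_eq_iff)
lemma nb2: "6 \<le> N \<Longrightarrow> nb N 2 = {1,3}"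
  unfolding nb_def gadj_def by (auto simp: doubleton_eq_iff)
lemma nb3: "6 \<le> N \<Longrightarrow> nb N 3 = {1,2,4}"
  unfolding nb_def gadj_def by (auto simp: doubleton_eq_iff)
lemma nb4: "6 \<le> N \<Longrightarrow> nb N 4 = {1,3,5}"
  unfolding nb_def gadj_def by (auto simp: doubleton_eq_iff)
lemma nbN: "6 \<le> N \<Longrightarrow> nb N N = {1,N-1}"
  unfolding nb_def gadj_def by (auto simp: doubleton_eq_iff)
lemma nb_sub: "x \<noteq> 1 \<Longrightarrow> nb N x \<subseteq> {1, x-1, x+1}"
  unfolding nb_def gadj_def by (auto simp: doubleton_eq_iff)

lemma card_nb_le: "x \<noteq> 1 \<Longrightarrow> card (nb N x) \<le> 3"
proof -
  assume "x \<noteq> 1"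
  hence "card (nb N x) \<le> card {1, x-1, x+1}" using nb_sub[of x N] by (intro card_mono) auto
  also have "\<dots> \<le> 3" by (simp add: card_insert_if)
  finally show ?thesis .
qed

lemma rigid:
  assumes N6: "6 \<le> N"
    and inj: "inj_on \<sigma> {1..N}" and img: "\<sigma> ` {1..N} = {1..N}"
    and adj: "\<And>x y. x \<in> {1..N} \<Longrightarrow> y \<in> {1..N} \<Longrightarrow> gadj N (\<sigma> x) (\<sigma> y) = gadj N x y"
  shows "\<forall>x\<in>{1..N}. \<sigma> x = x"
proof -
  have inr: "x \<in> {1..N} \<Longrightarrow> \<sigma> x \<in> {1..N}" for x using img by auto
  have nbimg: "\<sigma> ` nb N x = nb N (\<sigma> x)" if x: "x \<in> {1..N}" for x
  proof
    show "\<sigma> ` nb N x \<subseteq> nb N (\<sigma> x)" using adj x inr unfolding nb_def by auto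
    show "nb N (\<sigma> x) \<subseteq> \<sigma> ` nb N x"
    proof
      fix y assume y: "y \<in> nb N (\<sigma> x)"
      then have "y \<in> {1..N}" unfolding nb_def by auto
      then obtain z where z: "z \<in> {1..N}" "y = \<sigma> z" using img by (metis imageE)
      with y adj x show "y \<in> \<sigma> ` nb N x" unfolding nb_def by auto
    qed
  qed
  have deg: "card (nb N (\<sigma> x)) = card (nb N x)" if x: "x \<in> {1..N}" for x
  proof -
    have "inj_on \<sigma> (nb N x)" using inj by (rule inj_on_subset) (auto simp: nb_def)
    then show ?thesis using nbimg[OF x] card_image by metis
  qed
  have c1: "card (nb N 1) = 4" using N6 by (subst nb1[OF N6]) auto
  have c2: "card (nb N 2) = 2" using N6 by (simp add: nb2)
  have c3: "card (nb N 3) = 3" using N6 by (simp add: nb3)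
  have c4: "card (nb N 4) = 3" using N6 by (simp add: nb4)
  have cN: "card (nb N N) = 2" using N6 by (simp add: nbN)
  have in1: "1 \<in> {1..N}" "2 \<in> {1..N}" "3 \<in> {1..N}" "4 \<in> {1..N}" "5 \<in> {1..N}" using N6 by auto
  have injD: "x = y" if "x \<in> {1..N}" "y \<in> {1..N}" "\<sigma> x = \<sigma> y" for x y
    using inj_onD[OF inj that(3) that(1,2)] .
  have s1: "\<sigma> 1 = 1"
  proof (rule ccontr)
    assume "\<sigma> 1 \<noteq> 1"
    then have "card (nb N (\<sigma> 1)) \<le> 3" by (rule card_nb_le)
    with deg[OF in1(1)] c1 show False by simp
  qed
  have m34: "3 \<in> nb N 1" "4 \<in> nb N 1" using nb1[OF N6] by auto
  have a3: "\<sigma> 3 \<in> nb N 1" and a4: "\<sigma> 4 \<in> nb N 1"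
    using nbimg[OF in1(1)] s1 m34 by (metis imageI)+
  have s34: "\<sigma> 3 \<in> {3,4}" "\<sigma> 4 \<in> {3,4}"
  proof -
    have "\<sigma> 3 \<noteq> 2" "\<sigma> 3 \<noteq> N" "\<sigma> 4 \<noteq> 2" "\<sigma> 4 \<noteq> N"
      using deg[OF in1(3)] deg[OF in1(4)] c2 c3 c4 cN by auto
    then show "\<sigma> 3 \<in> {3,4}" "\<sigma> 4 \<in> {3,4}" using a3 a4 nb1[OF N6] by auto
  qed
  have ne34: "\<sigma> 3 \<noteq> \<sigma> 4" using injD[of 3 4] in1 by auto
  have s4: "\<sigma> 4 = 4"
  proof (rule ccontr)
    assume "\<sigma> 4 \<noteq> 4"
    then have h4: "\<sigma> 4 = 3" and h3: "\<sigma> 3 = 4" using s34 ne34 by auto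
    have "\<sigma> 5 \<in> nb N 3" using nbimg[OF in1(4)] h4 N6 by (auto simp: nb4)
    moreover have "\<sigma> 5 \<noteq> 1" using injD[of 5 1] in1 s1 by auto
    moreover have "\<sigma> 5 \<noteq> 4" using injD[of 5 3] in1 h3 by auto
    ultimately have "\<sigma> 5 = 2" using N6 by (auto simp: nb3)
    then have "gadj N (\<sigma> 1) (\<sigma> 5)" using s1 N6 by (simp add: gadj_def)
    then have "gadj N 1 5" using adj in1 by simp
    then show False using N6 by (auto simp: gadj_def doubleton_eq_iff)
  qed
  have s3: "\<sigma> 3 = 3" using s34 ne34 s4 by auto
  have s2: "\<sigma> 2 = 2"
  proof -
    have "\<sigma> 2 \<in> nb N 3" using nbimg[OF in1(3)] s3 N6 by (auto simp: nb3)
    moreover have "\<sigma> 2 \<noteq> 1" using injD[of 2 1] in1 s1 by auto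
    moreover have "\<sigma> 2 \<noteq> 4" using injD[of 2 4] in1 s4 by auto
    ultimately show ?thesis using N6 by (auto simp: nb3)
  qed
  have walk: "\<sigma> j = j \<and> \<sigma> (j-1) = j-1" if "4 \<le> j" "j \<le> N" for j
    using that
  proof (induction j rule: nat_induct_at_least)
    case base then show ?case using s4 s3 by simp
  next
    case (Suc j)
    then have IH: "\<sigma> j = j" "\<sigma> (j-1) = j-1" by auto
    have jr: "j \<in> {1..N}" "Suc j \<in> {1..N}" "j - 1 \<in> {1..N}" using Suc by auto
    have "Suc j \<in> nb N j" using jr unfolding nb_def gadj_def by auto
    hence "\<sigma> (Suc j) \<in> nb N j" using nbimg[OF jr(1)] IH(1) by (metis imageI)
    hence "\<sigma> (Suc j) \<in> {1, j-1, j+1}" using nb_sub[of j N] Suc by auto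
    moreover have "\<sigma> (Suc j) \<noteq> 1" using injD[of "Suc j" 1] jr in1 s1 Suc.hyps by auto
    moreover have "\<sigma> (Suc j) \<noteq> j - 1" using injD[of "Suc j" "j-1"] jr IH by auto
    ultimately show ?case using IH by auto
  qed
  show ?thesis
  proof
    fix x assume x: "x \<in> {1..N}"
    show "\<sigma> x = x"
    proof (cases "x \<le> 3")
      case True
      then have "x = 1 \<or> x = 2 \<or> x = 3" using x by auto
      then show ?thesis using s1 s2 s3 by auto
    next
      case False then show ?thesis using walk[of x] x by auto
    qed
  qed
qed



definition Tt :: "nat \<Rightarrow> nat \<Rightarrow> nat set" where "Tt N t = {N<..N+t}"
definition LS :: "nat \<Rightarrow> nat \<Rightarrow> nat set \<Rightarrow> bool" where
  "LS N t A \<longleftrightarrow> A \<subseteq> {1..N+t} \<and> card A = t + 1"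
definition RS :: "nat \<Rightarrow> nat \<Rightarrow> nat set \<Rightarrow> bool" where
  "RS N t B \<longleftrightarrow> B \<subseteq> {1..N+t} \<and> card B = t + 2"
definition Yg :: "nat \<Rightarrow> nat \<Rightarrow> nat set" where "Yg N i = {2, 4, i - N + 5}"
definition inH :: "nat \<Rightarrow> nat \<Rightarrow> nat set \<Rightarrow> bool" where
  "inH N t B \<longleftrightarrow> (\<exists>a b. gadj N a b \<and> B = Tt N t \<union> {a,b}) \<or> (\<exists>i\<in>Tt N t. B = (Tt N t - {i}) \<union> Yg N i)"

lemma gadj_range: "gadj N a b \<Longrightarrow> a \<in> {1..N} \<and> b \<in> {1..N}" by (simp add: gadj_def)
lemma gadj_irrefl: "6 \<le> N \<Longrightarrow> \<not> gadj N a a" by (auto simp: gadj_def)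

lemma two_nbrs: assumes "6 \<le> N" "a \<in> {1..N}" shows "\<exists>b c. b \<noteq> c \<and> gadj N a b \<and> gadj N a c"
proof (cases "a = 1")
  case True then show ?thesis using assms by (intro exI[of _ 2] exI[of _ N]) (auto simp: gadj_def)
next
  case False
  show ?thesis
  proof (cases "a = N")
    case True then show ?thesis using assms by (intro exI[of _ "N-1"] exI[of _ 1]) (auto simp: gadj_def)
  next
    case False
    then show ?thesis using assms \<open>a \<noteq> 1\<close> by (intro exI[of _ "a-1"] exI[of _ "a+1"]) (auto simp: gadj_def)
  qed
qed

locale base =
  fixes N t :: nat
  assumes N6: "6 \<le> N" and tN: "t + 5 \<le> N"
begin

abbreviation "T \<equiv> Tt N t"
abbreviation "Y \<equiv> Yg N"
abbreviation "H \<equiv> inH N t"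
abbreviation "L \<equiv> LS N t"
abbreviation "R \<equiv> RS N t"

lemma T_fin[simp]: "finite T" by (simp add: Tt_def)
lemma card_T[simp]: "card T = t" by (simp add: Tt_def)
lemma T_disj: "x \<in> T \<Longrightarrow> x \<notin> {1..N}" by (auto simp: Tt_def)
lemma T_U: "T \<subseteq> {1..N+t}" by (auto simp: Tt_def)
lemma U_split: "x \<in> {1..N+t} \<Longrightarrow> x \<notin> T \<Longrightarrow> x \<in> {1..N}" by (auto simp: Tt_def)

lemma cardTS: assumes "S \<subseteq> {1..N}" shows "card (T \<union> S) = t + card S"
proof -
  have "T \<inter> S = {}" using assms T_disj by blast
  moreover have "finite S" using assms finite_subset by blast
  ultimately show ?thesis by (simp add: card_Un_disjoint)
qed
lemma cardTiS: assumes "i \<in> T" "S \<subseteq> {1..N}" shows "card ((T - {i}) \<union> S) = (t - 1) + card S"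
proof -
  have "(T - {i}) \<inter> S = {}" using assms T_disj by blast
  moreover have "finite S" using assms finite_subset by blast
  ultimately show ?thesis using assms(1) by (simp add: card_Un_disjoint)
qed

lemma Y_sub: "i \<in> T \<Longrightarrow> Y i \<subseteq> {1..N}" using tN by (auto simp: Yg_def Tt_def)
lemma Y_card: "i \<in> T \<Longrightarrow> card (Y i) = 3" by (auto simp: Yg_def Tt_def)
lemma Y_inj: "i \<in> T \<Longrightarrow> j \<in> T \<Longrightarrow> Y i = Y j \<Longrightarrow> i = j"
  by (auto simp: Yg_def Tt_def doubleton_eq_iff insert_eq_iff)
lemma Y_indep: "i \<in> T \<Longrightarrow> a \<in> Y i \<Longrightarrow> b \<in> Y i \<Longrightarrow> \<not> gadj N a b"
  using N6 by (auto simp: Yg_def Tt_def gadj_def doubleton_eq_iff)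
lemma Y_notT: "i \<in> T \<Longrightarrow> i \<notin> Y i" using Y_sub T_disj by blast

lemma L_star: "a \<in> {1..N} \<Longrightarrow> L (T \<union> {a})"
  unfolding LS_def using cardTS[of "{a}"] T_U by auto
lemma R_star: "a \<in> {1..N} \<Longrightarrow> b \<in> {1..N} \<Longrightarrow> a \<noteq> b \<Longrightarrow> R (T \<union> {a,b})"
  unfolding RS_def using cardTS[of "{a,b}"] T_U by auto
lemma L_near: "i \<in> T \<Longrightarrow> a \<in> {1..N} \<Longrightarrow> b \<in> {1..N} \<Longrightarrow> a \<noteq> b \<Longrightarrow> L ((T - {i}) \<union> {a,b})"
  unfolding LS_def using cardTiS[of i "{a,b}"] T_U by (auto simp: Tt_def)
lemma R_near: "i \<in> T \<Longrightarrow> a \<in> {1..N} \<Longrightarrow> b \<in> {1..N} \<Longrightarrow> c \<in> {1..N} \<Longrightarrow> a \<noteq> b \<Longrightarrow> a \<noteq> c \<Longrightarrow> b \<noteq> c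
   \<Longrightarrow> R ((T - {i}) \<union> {a,b,c})"
  unfolding RS_def using cardTiS[of i "{a,b,c}"] T_U by (auto simp: Tt_def)
lemma R_gad: "i \<in> T \<Longrightarrow> R ((T - {i}) \<union> Y i)"
  unfolding RS_def using cardTiS[of i "Y i"] Y_sub[of i] Y_card[of i] T_U by (auto simp: Tt_def)

lemma L_fin: "L A \<Longrightarrow> finite A" unfolding LS_def by (auto intro: finite_subset)
lemma R_fin: "R A \<Longrightarrow> finite A" unfolding RS_def by (auto intro: finite_subset)

lemma inter_eq:
  assumes "R B1" "R B2" "B1 \<noteq> B2" "L A" "A \<subseteq> B1" "A \<subseteq> B2"
  shows "A = B1 \<inter> B2"
proof -
  have "B1 \<inter> B2 \<subset> B1" using assms(1-3) R_fin card_subset_eq unfolding RS_def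
    by (metis Int_lower1 Int_lower2 inf.absorb_iff1 psubsetI)
  then have "card (B1 \<inter> B2) < t + 2" using psubset_card_mono R_fin[OF assms(1)] assms(1) unfolding RS_def by metis
  then show ?thesis using assms(4-6) R_fin[OF assms(1)] unfolding LS_def
    by (intro card_seteq) auto
qed

lemma star_form: assumes "L A" "T \<subseteq> A" shows "\<exists>a\<in>{1..N}. A = T \<union> {a}"
proof -
  have "card (A - T) = 1" using assms L_fin by (simp add: card_Diff_subset LS_def)
  then obtain a where a: "A - T = {a}" by (rule card_1_singletonE)
  then have "a \<in> A" "a \<notin> T" by auto
  then have "a \<in> {1..N}" using assms(1) U_split unfolding LS_def by blast
  moreover have "A = T \<union> {a}" using a assms(2) by auto
  ultimately show ?thesis by auto
qed

lemma inH_star: assumes "a \<in> {1..N}" "b \<in> {1..N}" shows "H (T \<union> {a,b}) \<longleftrightarrow> gadj N a b"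
proof
  assume "H (T \<union> {a,b})"
  then consider (1) a' b' where "gadj N a' b'" "T \<union> {a,b} = T \<union> {a',b'}"
    | (2) i where "i \<in> T" "T \<union> {a,b} = (T - {i}) \<union> Y i" unfolding inH_def by blast
  then show "gadj N a b"
  proof cases
    case 1
    have "(T \<union> {a,b}) \<inter> {1..N} = {a,b}" "(T \<union> {a',b'}) \<inter> {1..N} = {a',b'}"
      using assms gadj_range[OF 1(1)] T_disj by auto
    then have "{a,b} = {a',b'}" using 1 by simp
    then show ?thesis using 1(1) gadj_sym by (auto simp: doubleton_eq_iff)
  next
    case 2
    then have "i \<in> (T - {i}) \<union> Y i" by blast
    then show ?thesis using Y_notT[OF 2(1)] by auto
  qed
qed (auto simp: inH_def)

lemma star_char:
  assumes "L A"
  shows "T \<subseteq> A \<longleftrightarrow> (\<exists>B1 B2. R B1 \<and> R B2 \<and> B1 \<noteq> B2 \<and> H B1 \<and> H B2 \<and> A \<subseteq> B1 \<and> A \<subseteq> B2)"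
proof
  assume "T \<subseteq> A"
  then obtain a where a: "a \<in> {1..N}" "A = T \<union> {a}" using star_form assms by blast
  obtain b c where bc: "b \<noteq> c" "gadj N a b" "gadj N a c" using two_nbrs[OF N6 a(1)] by blast
  have r: "b \<in> {1..N}" "c \<in> {1..N}" "a \<noteq> b" "a \<noteq> c" using bc gadj_range gadj_irrefl[OF N6] by metis+
  have ne: "T \<union> {a,b} \<noteq> T \<union> {a,c}"
  proof
    assume eq: "T \<union> {a,b} = T \<union> {a,c}"
    have "b \<in> T \<union> {a,c}" using eq by blast
    moreover have "b \<notin> T" using T_disj r by blast
    ultimately show False using r bc by auto
  qed
  show "\<exists>B1 B2. R B1 \<and> R B2 \<and> B1 \<noteq> B2 \<and> H B1 \<and> H B2 \<and> A \<subseteq> B1 \<and> A \<subseteq> B2"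
    apply (rule exI[of _ "T \<union> {a,b}"], rule exI[of _ "T \<union> {a,c}"])
    using R_star[of a b] R_star[of a c] r a ne bc unfolding inH_def by blast
next
  assume "\<exists>B1 B2. R B1 \<and> R B2 \<and> B1 \<noteq> B2 \<and> H B1 \<and> H B2 \<and> A \<subseteq> B1 \<and> A \<subseteq> B2"
  then obtain B1 B2 where B: "R B1" "R B2" "B1 \<noteq> B2" "H B1" "H B2" "A \<subseteq> B1" "A \<subseteq> B2" by blast
  have AI: "A = B1 \<inter> B2" using inter_eq B assms by blast
  have cA: "card A = t + 1" "finite A" using assms L_fin unfolding LS_def by auto
  have mixed: False if "gadj N a b" "i \<in> T" "A \<subseteq> (T \<union> {a,b}) \<inter> ((T - {i}) \<union> Y i)" for a b i
  proof -
    have ab: "a \<in> {1..N}" "b \<in> {1..N}" using gadj_range that(1) by auto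
    have "A \<subseteq> (T - {i}) \<union> ({a,b} \<inter> Y i)" using that(3) Y_sub[OF that(2)] T_disj ab by blast
    then have "card A \<le> card ((T - {i}) \<union> ({a,b} \<inter> Y i))" by (intro card_mono) auto
    also have "\<dots> = (t - 1) + card ({a,b} \<inter> Y i)" using cardTiS[OF that(2), of "{a,b} \<inter> Y i"] ab by fastforce
    finally have c1: "card A \<le> t - 1 + card ({a,b} \<inter> Y i)" .
    have "0 < t" using that(2) by (auto simp: Tt_def)
    then have "2 \<le> card ({a,b} \<inter> Y i)" using cA c1 by simp
    moreover have "card {a,b} \<le> 2" by (cases "a = b") auto
    ultimately have "{a,b} \<inter> Y i = {a,b}" by (intro card_seteq) auto
    then have "a \<in> Y i" "b \<in> Y i" by auto
    then show False using Y_indep[OF that(2)] that(1) by blast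
  qed
  show "T \<subseteq> A"
  proof (rule ccontr)
    assume nT: "\<not> T \<subseteq> A"
    have h1: "(\<exists>a b. gadj N a b \<and> B1 = T \<union> {a,b}) \<or> (\<exists>i\<in>T. B1 = (T - {i}) \<union> Y i)"
      using B(4) unfolding inH_def .
    have h2: "(\<exists>a b. gadj N a b \<and> B2 = T \<union> {a,b}) \<or> (\<exists>i\<in>T. B2 = (T - {i}) \<union> Y i)"
      using B(5) unfolding inH_def .
    have c22: False if 22: "i \<in> T" "B1 = (T - {i}) \<union> Y i" "j \<in> T" "B2 = (T - {j}) \<union> Y j" for i j
    proof -
      have ij: "i \<noteq> j" using 22 B(3) by auto
      have YY: "Y i \<noteq> Y j" using Y_inj 22 ij by blast
      have cYY: "card (Y i \<inter> Y j) \<le> 2"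
      proof -
        have fin: "finite (Y j)" "finite (Y i)" by (simp_all add: Yg_def)
        have "\<not> Y i \<subseteq> Y j"
        proof
          assume "Y i \<subseteq> Y j"
          then have "Y i = Y j" using card_subset_eq[OF fin(1)] Y_card 22 by metis
          with YY show False ..
        qed
        then have "card (Y i \<inter> Y j) < card (Y i)" using fin by (intro psubset_card_mono) auto
        then show ?thesis using Y_card[OF 22(1)] by simp
      qed
      have "A \<subseteq> (T - {i,j}) \<union> (Y i \<inter> Y j)" using AI 22 Y_sub T_disj by blast
      then have "card A \<le> card ((T - {i,j}) \<union> (Y i \<inter> Y j))" by (intro card_mono) (auto simp: Yg_def)
      also have "\<dots> \<le> card (T - {i,j}) + card (Y i \<inter> Y j)" by (rule card_Un_le)
      also have "card (T - {i,j}) = t - 2" using 22 ij by (subst card_Diff_subset) auto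
      finally have "card A \<le> t - 2 + card (Y i \<inter> Y j)" .
      moreover have "2 \<le> t" using card_mono[of T "{i,j}"] 22 ij by auto
      ultimately show False using cA cYY by linarith
    qed
    from h1 show False
    proof (elim disjE exE conjE bexE)
      fix a b assume a1: "gadj N a b" "B1 = T \<union> {a,b}"
      from h2 show False
      proof (elim disjE exE conjE bexE)
        fix a' b' assume "gadj N a' b'" "B2 = T \<union> {a',b'}"
        then show False using nT AI a1 by auto
      next
        fix i assume "i \<in> T" "B2 = (T - {i}) \<union> Y i"
        then show False using mixed[of a b i] AI a1 by blast
      qed
    next
      fix i assume a1: "i \<in> T" "B1 = (T - {i}) \<union> Y i"
      from h2 show False
      proof (elim disjE exE conjE bexE)
        fix a b assume "gadj N a b" "B2 = T \<union> {a,b}"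
        then show False using mixed[of a b i] AI a1 by blast
      next
        fix j assume "j \<in> T" "B2 = (T - {j}) \<union> Y j"
        then show False using c22[of i j] a1 by blast
      qed
    qed
  qed
qed

end



locale rig = base +
  fixes fL fR :: "nat set \<Rightarrow> nat set"
  assumes L1: "LS N t A \<Longrightarrow> LS N t (fL A)"
    and Linj: "LS N t A \<Longrightarrow> LS N t A' \<Longrightarrow> fL A = fL A' \<Longrightarrow> A = A'"
    and Lsurj: "LS N t A' \<Longrightarrow> \<exists>A. LS N t A \<and> fL A = A'"
    and R1: "RS N t B \<Longrightarrow> RS N t (fR B)"
    and Rinj: "RS N t B \<Longrightarrow> RS N t B' \<Longrightarrow> fR B = fR B' \<Longrightarrow> B = B'"
    and Rsurj: "RS N t B' \<Longrightarrow> \<exists>B. RS N t B \<and> fR B = B'"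
    and adj: "LS N t A \<Longrightarrow> RS N t B \<Longrightarrow> fL A \<subseteq> fR B \<longleftrightarrow> A \<subseteq> B"
    and Hp: "RS N t B \<Longrightarrow> inH N t (fR B) \<longleftrightarrow> inH N t B"
begin

lemma cardL: "L A \<Longrightarrow> card A = t + 1" by (simp add: LS_def)
lemma cardR: "R A \<Longrightarrow> card A = t + 2" by (simp add: RS_def)

lemma Rfix:
  assumes a: "L A1" "L A2" "A1 \<noteq> A2" "A1 \<subseteq> B" "A2 \<subseteq> B" "R B" "fL A1 = A1" "fL A2 = A2"
  shows "fR B = B"
proof -
  have sub: "A1 \<union> A2 \<subseteq> fR B" using adj[OF a(1,6)] adj[OF a(2,6)] a by auto
  have fB: "finite B" using R_fin a(6) .
  have "\<not> A2 \<subseteq> A1"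
  proof
    assume "A2 \<subseteq> A1"
    then have "A2 = A1" using card_subset_eq[of A1 A2] L_fin a cardL by metis
    then show False using a(3) by simp
  qed
  then have "A1 \<subset> A1 \<union> A2" by auto
  then have "card A1 < card (A1 \<union> A2)" using fB a by (intro psubset_card_mono) (auto intro: finite_subset)
  then have "card B \<le> card (A1 \<union> A2)" using cardL[OF a(1)] cardR[OF a(6)] by simp
  then have "A1 \<union> A2 = B" using fB a by (intro card_seteq) auto
  then have "B \<subseteq> fR B" using sub by simp
  moreover have "card (fR B) \<le> card B" using cardR a(6) R1[OF a(6)] by simp
  ultimately show ?thesis using R_fin[OF R1[OF a(6)]] by (metis card_seteq)
qed

lemma Lfix:
  assumes a: "R B1" "R B2" "B1 \<noteq> B2" "L A" "A \<subseteq> B1" "A \<subseteq> B2" "fR B1 = B1" "fR B2 = B2"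
  shows "fL A = A"
proof -
  have AI: "A = B1 \<inter> B2" using inter_eq a by blast
  have "fL A \<subseteq> A" using adj[OF a(4,1)] adj[OF a(4,2)] a AI by auto
  moreover have "card A \<le> card (fL A)" using cardL L1 a(4) by simp
  ultimately show ?thesis using card_seteq L_fin[OF a(4)] by blast
qed

lemma F1: assumes "L A" shows "T \<subseteq> fL A \<longleftrightarrow> T \<subseteq> A"
proof
  assume "T \<subseteq> A"
  then obtain B1 B2 where B: "R B1" "R B2" "B1 \<noteq> B2" "H B1" "H B2" "A \<subseteq> B1" "A \<subseteq> B2"
    using star_char[OF assms] by blast
  have "fR B1 \<noteq> fR B2" using Rinj B by blast
  moreover have "H (fR B1)" "H (fR B2)" using Hp B by auto
  moreover have "fL A \<subseteq> fR B1" "fL A \<subseteq> fR B2" using adj assms B by auto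
  ultimately show "T \<subseteq> fL A" using star_char[OF L1[OF assms]] R1[OF B(1)] R1[OF B(2)] by blast
next
  assume "T \<subseteq> fL A"
  then obtain B1 B2 where B: "R B1" "R B2" "B1 \<noteq> B2" "H B1" "H B2" "fL A \<subseteq> B1" "fL A \<subseteq> B2"
    using star_char[OF L1[OF assms]] by blast
  obtain C1 where C1: "R C1" "fR C1 = B1" using Rsurj B(1) by blast
  obtain C2 where C2: "R C2" "fR C2 = B2" using Rsurj B(2) by blast
  have "C1 \<noteq> C2" using C1 C2 B(3) by auto
  moreover have "H C1" "H C2" using Hp C1 C2 B by auto
  moreover have "A \<subseteq> C1" "A \<subseteq> C2" using adj assms C1 C2 B by auto
  ultimately show "T \<subseteq> A" using star_char[OF assms] C1 C2 by blast
qed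

lemma F2: assumes "R B" "T \<subseteq> fR B" shows "T \<subseteq> B"
proof -
  have RB: "R (fR B)" using R1 assms(1) .
  have fin: "finite (fR B)" using R_fin RB .
  have "card (fR B - T) = 2" using assms(2) RB by (simp add: card_Diff_subset cardR)
  then obtain b where b: "b \<in> fR B" "b \<notin> T" by (metis Diff_iff card_0_eq finite_Diff fin zero_neq_numeral ex_in_conv)
  let ?A' = "fR B - {b}"
  have "L ?A'" using RB b unfolding LS_def RS_def by (auto simp: card_Diff_singleton)
  then obtain A where A: "L A" "fL A = ?A'" using Lsurj by blast
  have "T \<subseteq> ?A'" using assms(2) b by auto
  then have "T \<subseteq> A" using F1[OF A(1)] A(2) by simp
  moreover have "A \<subseteq> B" using adj[OF A(1) assms(1)] A(2) by auto
  ultimately show ?thesis by simp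
qed

definition sig :: "nat \<Rightarrow> nat" where "sig a = the_elem (fL (T \<union> {a}) - T)"

lemma sig_prop: assumes "a \<in> {1..N}" shows "sig a \<in> {1..N} \<and> fL (T \<union> {a}) = T \<union> {sig a}"
proof -
  have LA: "L (fL (T \<union> {a}))" using L1 L_star assms by blast
  have "T \<subseteq> fL (T \<union> {a})" using F1 L_star[OF assms] by blast
  then obtain b where b: "b \<in> {1..N}" "fL (T \<union> {a}) = T \<union> {b}" using star_form LA by blast
  have "fL (T \<union> {a}) - T = {b}" using b T_disj by auto
  then have "sig a = b" unfolding sig_def by simp
  then show ?thesis using b by simp
qed

lemma sig_fix: "a \<in> {1..N} \<Longrightarrow> sig a = a"
proof -
  have into: "sig ` {1..N} \<subseteq> {1..N}" using sig_prop by auto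
  have inj: "inj_on sig {1..N}"
  proof (rule inj_onI)
    fix x y assume xy: "x \<in> {1..N}" "y \<in> {1..N}" "sig x = sig y"
    then have "fL (T \<union> {x}) = fL (T \<union> {y})" using sig_prop by metis
    then have "T \<union> {x} = T \<union> {y}" using Linj L_star xy by blast
    then show "x = y" using xy T_disj by blast
  qed
  have img: "sig ` {1..N} = {1..N}" using endo_inj_surj[OF _ into inj] by simp
  have adjs: "gadj N (sig x) (sig y) = gadj N x y" if xy: "x \<in> {1..N}" "y \<in> {1..N}" for x y
  proof (cases "x = y")
    case True then show ?thesis using gadj_irrefl[OF N6] by simp
  next
    case False
    have sxy: "sig x \<noteq> sig y" using inj xy False by (meson inj_on_eq_iff)
    have Rxy: "R (T \<union> {x,y})" using R_star xy False by blast
    have sx: "sig x \<in> {1..N}" "sig y \<in> {1..N}" using sig_prop xy by auto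
    have "fL (T \<union> {x}) \<subseteq> fR (T \<union> {x,y})" "fL (T \<union> {y}) \<subseteq> fR (T \<union> {x,y})"
      using adj[OF L_star[OF xy(1)] Rxy] adj[OF L_star[OF xy(2)] Rxy] by auto
    then have "T \<union> {sig x, sig y} \<subseteq> fR (T \<union> {x,y})" using sig_prop xy by auto
    moreover have "card (fR (T \<union> {x,y})) \<le> card (T \<union> {sig x, sig y})"
      using R1[OF Rxy] R_star[OF sx sxy] by (simp add: cardR)
    ultimately have eq: "fR (T \<union> {x,y}) = T \<union> {sig x, sig y}"
      using R_fin[OF R1[OF Rxy]] by (metis card_seteq)
    show ?thesis using Hp[OF Rxy] inH_star[OF sx] inH_star[OF xy] eq by simp
  qed
  show "a \<in> {1..N} \<Longrightarrow> sig a = a" using rigid[OF N6 inj img adjs] by blast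
qed

lemma starL_fix: "a \<in> {1..N} \<Longrightarrow> fL (T \<union> {a}) = T \<union> {a}"
  using sig_prop sig_fix by metis

lemma starR_fix: assumes "a \<in> {1..N}" "b \<in> {1..N}" "a \<noteq> b" shows "fR (T \<union> {a,b}) = T \<union> {a,b}"
proof (rule Rfix[of "T \<union> {a}" "T \<union> {b}"])
  show "T \<union> {a} \<noteq> T \<union> {b}" using assms T_disj by blast
qed (use assms L_star R_star starL_fix in auto)

end



context rig begin

lemma xlem: assumes "i \<in> T" "a \<in> {1..N}" "x \<in> {1..N}" "a \<noteq> x"
  shows "x \<in> fL ((T - {i}) \<union> {a,x})"
proof (rule ccontr)
  assume nx: "x \<notin> fL ((T - {i}) \<union> {a,x})"
  let ?A = "(T - {i}) \<union> {a,x}"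
  have LA: "L ?A" using L_near assms by blast
  have RB: "R (T \<union> {a,x})" using R_star assms by blast
  have "fL ?A \<subseteq> fR (T \<union> {a,x})" using adj[OF LA RB] by auto
  then have "fL ?A \<subseteq> T \<union> {a}" using starR_fix assms nx by auto
  moreover have "card (T \<union> {a}) \<le> card (fL ?A)" using L1[OF LA] L_star[OF assms(2)] by (simp add: cardL)
  ultimately have "fL ?A = T \<union> {a}" by (rule card_seteq[OF L_fin[OF L_star[OF assms(2)]]])
  then have "T \<subseteq> fL ?A" by blast
  then have "T \<subseteq> ?A" using F1[OF LA] by simp
  moreover have "i \<notin> ?A" using assms T_disj by auto
  ultimately show False using assms(1) by blast
qed

lemma gadget: assumes i: "i \<in> T" shows "fR ((T - {i}) \<union> Y i) = (T - {i}) \<union> Y i"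
proof -
  let ?B = "(T - {i}) \<union> Y i"
  have RB: "R ?B" using R_gad i .
  have HB: "H ?B" using i unfolding inH_def by blast
  have HfB: "H (fR ?B)" using Hp[OF RB] HB by simp
  have "\<not> T \<subseteq> ?B" using i Y_notT[OF i] by blast
  then have nT: "\<not> T \<subseteq> fR ?B" using F2[OF RB] by blast
  have hh: "(\<exists>a b. gadj N a b \<and> fR ?B = T \<union> {a,b}) \<or> (\<exists>j\<in>T. fR ?B = (T - {j}) \<union> Y j)"
    using HfB unfolding inH_def .
  have "\<exists>j\<in>T. fR ?B = (T - {j}) \<union> Y j"
  proof (rule disjE[OF hh])
    assume "\<exists>a b. gadj N a b \<and> fR ?B = T \<union> {a,b}"
    then obtain a b where "fR ?B = T \<union> {a,b}" by blast
    then have "T \<subseteq> fR ?B" by auto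
    then show ?thesis using nT by contradiction
  qed
  then obtain j where j: "j \<in> T" "fR ?B = (T - {j}) \<union> Y j" by (rule bexE)
  have Ysub: "Y i \<subseteq> fR ?B"
  proof
    fix y assume y: "y \<in> Y i"
    define a where "a = (if y = 2 then (4::nat) else 2)"
    have a: "a \<in> Y i" "a \<noteq> y" unfolding a_def Yg_def by auto
    have ay: "a \<in> {1..N}" "y \<in> {1..N}" using a y Y_sub[OF i] by auto
    have LA: "L ((T - {i}) \<union> {a,y})" using L_near i ay a by blast
    have "(T - {i}) \<union> {a,y} \<subseteq> ?B" using a y by auto
    then have "fL ((T - {i}) \<union> {a,y}) \<subseteq> fR ?B" using adj[OF LA RB] by simp
    then show "y \<in> fR ?B" using xlem[OF i ay a(2)] by blast
  qed
  then have "Y i \<subseteq> Y j" using j Y_sub[OF i] T_disj by blast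
  moreover have "card (Y j) \<le> card (Y i)" using Y_card i j by simp
  ultimately have "Y i = Y j" by (rule card_seteq[OF finite_subset[OF Y_sub[OF j(1)] finite_atLeastAtMost]])
  then have "i = j" using Y_inj i j by blast
  then show ?thesis using j by simp
qed

lemma near_seed: assumes i: "i \<in> T" shows "fL ((T - {i}) \<union> {2,4}) = (T - {i}) \<union> {2,4}"
proof (rule Lfix[of "(T - {i}) \<union> Y i" "T \<union> {2,4}"])
  have r: "(2::nat) \<in> {1..N}" "(4::nat) \<in> {1..N}" using N6 by auto
  show "R ((T - {i}) \<union> Y i)" using R_gad i .
  show "R (T \<union> {2,4})" using R_star r by auto
  show "(T - {i}) \<union> Y i \<noteq> T \<union> {2,4}" using i Y_notT[OF i] by blast
  show "L ((T - {i}) \<union> {2,4})" using L_near i r by auto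
  show "(T - {i}) \<union> {2,4} \<subseteq> (T - {i}) \<union> Y i" by (auto simp: Yg_def)
  show "(T - {i}) \<union> {2,4} \<subseteq> T \<union> {2,4}" by auto
  show "fR ((T - {i}) \<union> Y i) = (T - {i}) \<union> Y i" using gadget i .
  show "fR (T \<union> {2,4}) = T \<union> {2,4}" using starR_fix r by auto
qed

lemma near_step:
  assumes i: "i \<in> T" and r: "a \<in> {1..N}" "b \<in> {1..N}" "x \<in> {1..N}" and d: "a \<noteq> b" "x \<noteq> a" "x \<noteq> b"
    and fx: "fL ((T - {i}) \<union> {a,b}) = (T - {i}) \<union> {a,b}"
  shows "fL ((T - {i}) \<union> {a,x}) = (T - {i}) \<union> {a,x}"
proof -
  let ?A = "(T - {i}) \<union> {a,b}" and ?C = "(T - {i}) \<union> {a,b,x}" and ?A2 = "(T - {i}) \<union> {a,x}"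
  have RC: "R ?C" using R_near[OF i r(1,2,3)] d by auto
  have LA: "L ?A" using L_near i r d by auto
  have LA2: "L ?A2" using L_near i r d by auto
  have "?A \<subseteq> fR ?C" using adj[OF LA RC] fx by auto
  moreover have "fL ?A2 \<subseteq> fR ?C" using adj[OF LA2 RC] by auto
  then have "x \<in> fR ?C" using xlem[OF i r(1,3)] d by blast
  ultimately have "?C \<subseteq> fR ?C" by auto
  moreover have "card (fR ?C) \<le> card ?C" using R1[OF RC] RC by (simp add: cardR)
  ultimately have fC: "?C = fR ?C" by (rule card_seteq[OF R_fin[OF R1[OF RC]]])
  show ?thesis
  proof (rule Lfix[of ?C "T \<union> {a,x}"])
    show "R ?C" by (rule RC)
    show "R (T \<union> {a,x})" using R_star r d by auto
    show "?C \<noteq> T \<union> {a,x}"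
    proof
      assume eq: "?C = T \<union> {a,x}"
      have "i \<in> ?C" using i eq by blast
      moreover have "i \<notin> {a,b,x}" using T_disj[OF i] r by auto
      ultimately show False by blast
    qed
    show "L ?A2" by (rule LA2)
    show "?A2 \<subseteq> ?C" by auto
    show "?A2 \<subseteq> T \<union> {a,x}" by auto
    show "fR ?C = ?C" using fC by simp
    show "fR (T \<union> {a,x}) = T \<union> {a,x}" using starR_fix r d by auto
  qed
qed

lemma near_all:
  assumes i: "i \<in> T" and r: "c \<in> {1..N}" "d \<in> {1..N}" "c \<noteq> d"
  shows "fL ((T - {i}) \<union> {c,d}) = (T - {i}) \<union> {c,d}"
proof -
  let ?P = "\<lambda>a b. fL ((T - {i}) \<union> {a,b}) = (T - {i}) \<union> {a,b}"
  have sym: "?P a b \<Longrightarrow> ?P b a" for a b by (simp add: insert_commute)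
  have ext: "?P a x" if "?P a b" "a \<in> {1..N}" "b \<in> {1..N}" "x \<in> {1..N}" "a \<noteq> b" "x \<noteq> a" for a b x
  proof (cases "x = b")
    case True then show ?thesis using that by simp
  next
    case False then show ?thesis using near_step[OF i that(2,3,4) that(5,6) False that(1)] by simp
  qed
  have r24: "(2::nat) \<in> {1..N}" "(4::nat) \<in> {1..N}" using N6 by auto
  have s: "?P 2 4" using near_seed i .
  show ?thesis
  proof (cases "c = 2")
    case True then show ?thesis using ext[OF s r24 r(2)] r by auto
  next
    case False
    have "?P 2 c" using ext[OF s r24 r(1)] False by auto
    then have "?P c 2" by (rule sym)
    then show ?thesis using ext[of c 2 d] r r24 False by auto
  qed
qed

lemma two_elems: assumes "2 \<le> card S" shows "\<exists>x y. x \<in> S \<and> y \<in> S \<and> x \<noteq> y"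
proof -
  have fin: "finite S" using assms by (metis card.infinite not_numeral_le_zero)
  have "S \<noteq> {}" using assms by auto
  then obtain x where x: "x \<in> S" by blast
  have "card (S - {x}) \<ge> 1" using assms x fin by (simp add: card_Diff_singleton)
  then have "S - {x} \<noteq> {}" by (metis card.empty not_one_le_zero)
  then obtain y where "y \<in> S - {x}" by blast
  then show ?thesis using x by blast
qed

lemma allL: "L A \<Longrightarrow> fL A = A"
proof (induction "card (T - A)" arbitrary: A rule: less_induct)
  case less
  have LA: "L A" by fact
  have finA: "finite A" using L_fin LA .
  have AU: "A \<subseteq> {1..N+t}" using LA by (simp add: LS_def)
  have c1: "card (T \<inter> A) + card (T - A) = t"
    using card_Int_Diff[of T A] by simp
  have c2: "card (A - T) = card A - card (A \<inter> T)" using card_Diff_subset_Int[of A T] finA by simp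
  have cA: "card A = t + 1" using cardL LA .
  have ATN: "A - T \<subseteq> {1..N}" using AU U_split by blast
  consider "card (T - A) = 0" | "card (T - A) = 1" | "2 \<le> card (T - A)" by linarith
  then show ?case
  proof cases
    case 1
    then have "T \<subseteq> A" by (simp add: card_eq_0_iff)
    then obtain a where "a \<in> {1..N}" "A = T \<union> {a}" using star_form LA by blast
    then show ?thesis using starL_fix by simp
  next
    case 2
    then obtain i where i: "T - A = {i}" using card_1_singletonE by blast
    have iT: "i \<in> T" using i by blast
    have AT: "A \<inter> T = T - {i}" using i by blast
    have "card (A - T) = 2" using c1 c2 cA 2 by (simp add: Int_commute)
    then obtain a b where ab: "A - T = {a,b}" "a \<noteq> b" by (meson card_2_iff)
    have abN: "a \<in> {1..N}" "b \<in> {1..N}" using ab ATN by auto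
    have eqA: "A = (T - {i}) \<union> {a,b}" using AT ab by blast
    show ?thesis using near_all[OF iT abN ab(2)] by (subst (1 2) eqA)
  next
    case 3
    obtain i i' where ii: "i \<in> T - A" "i' \<in> T - A" "i \<noteq> i'" using two_elems[OF 3] by blast
    have "card (A - T) \<ge> 2" using c1 c2 cA 3 by (simp add: Int_commute)
    then obtain b1 b2 where b: "b1 \<in> A - T" "b2 \<in> A - T" "b1 \<noteq> b2" using two_elems by blast
    have RjA: "R (insert j A)" if j: "j \<in> T - A" for j
    proof -
      have jU: "j \<in> {1..N+t}" using j T_U by blast
      then show ?thesis using j AU cA finA unfolding RS_def by auto
    qed
    have Bfix: "fR (insert j A) = insert j A" if j: "j \<in> T - A" for j
    proof -
      have jU: "j \<in> {1..N+t}" using j T_U by blast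
      have Lsub: "L (insert j (A - {bb}))" if bb: "bb \<in> A - T" for bb
        using j AU jU cA finA bb unfolding LS_def by (auto simp: card_Diff_singleton)
      have Tsub: "T - insert j (A - {bb}) = (T - A) - {j}" if bb: "bb \<in> A - T" for bb
        using bb by blast
      have lt: "card ((T - A) - {j}) < card (T - A)" using j by (intro card_Diff1_less) auto
      have fix1: "fL (insert j (A - {bb})) = insert j (A - {bb})" if bb: "bb \<in> A - T" for bb
        using less.hyps[OF _ Lsub[OF bb]] Tsub[OF bb] lt by simp
      show ?thesis
      proof (rule Rfix[of "insert j (A - {b1})" "insert j (A - {b2})"])
        show "insert j (A - {b1}) \<noteq> insert j (A - {b2})"
        proof
          assume eq: "insert j (A - {b1}) = insert j (A - {b2})"
          have "b2 \<in> insert j (A - {b1})" using b by blast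
          then have "b2 \<in> insert j (A - {b2})" using eq by simp
          then show False using b j by blast
        qed
        show "L (insert j (A - {b1}))" "L (insert j (A - {b2}))" using Lsub b by auto
        show "insert j (A - {b1}) \<subseteq> insert j A" "insert j (A - {b2}) \<subseteq> insert j A" by auto
        show "R (insert j A)" using RjA[OF j] .
        show "fL (insert j (A - {b1})) = insert j (A - {b1})" using fix1 b(1) .
        show "fL (insert j (A - {b2})) = insert j (A - {b2})" using fix1 b(2) .
      qed
    qed
    have "fL A \<subseteq> fR (insert i A)" using adj[OF LA RjA[OF ii(1)]] by auto
    moreover have "fL A \<subseteq> fR (insert i' A)" using adj[OF LA RjA[OF ii(2)]] by auto
    ultimately have "fL A \<subseteq> insert i A \<inter> insert i' A" using Bfix ii by auto
    also have "\<dots> = A" using ii by auto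
    finally have "fL A \<subseteq> A" .
    moreover have "card A \<le> card (fL A)" using L1[OF LA] cA by (simp add: cardL)
    ultimately show ?thesis by (rule card_seteq[OF finA])
  qed
qed

lemma allR: assumes "R B" shows "fR B = B"
proof -
  have cB: "card B = t + 2" using cardR assms .
  then obtain b1 b2 where b: "b1 \<in> B" "b2 \<in> B" "b1 \<noteq> b2"
    using two_elems[of B] by auto
  have L: "L (B - {bb})" if "bb \<in> B" for bb using assms that unfolding LS_def RS_def by (auto simp: card_Diff_singleton)
  show ?thesis
  proof (rule Rfix[of "B - {b1}" "B - {b2}"])
    show "L (B - {b1})" "L (B - {b2})" using L b by auto
    show "B - {b1} \<noteq> B - {b2}" using b by blast
    show "B - {b1} \<subseteq> B" "B - {b2} \<subseteq> B" by auto
    show "R B" by (rule assms)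
    show "fL (B - {b1}) = B - {b1}" "fL (B - {b2}) = B - {b2}" using allL L b by auto
  qed
qed

end



lemma memL: "Inl A \<in> LG1_V k n \<longleftrightarrow> A \<subseteq> {1..n} \<and> card A = k - 1"
  unfolding LG1_V_def by auto
lemma memR: "Inr B \<in> LG1_V k n \<longleftrightarrow> B \<subseteq> {1..n} \<and> card B = k"
  unfolding LG1_V_def by auto

definition tau :: "nat \<Rightarrow> nat" where "tau x = (if x = 1 then 2 else if x = 2 then 1 else x)"
lemma tau_tau[simp]: "tau (tau x) = x" by (simp add: tau_def)
lemma inj_tau: "inj tau" by (metis injI tau_tau)
lemma tau_mem: "x \<in> tau ` A \<longleftrightarrow> tau x \<in> A" by (metis image_iff tau_tau)
lemma tau_img_img[simp]: "tau ` tau ` A = A" by (simp add: image_image)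
lemma tau_range: "2 \<le> n \<Longrightarrow> A \<subseteq> {1..n} \<Longrightarrow> tau ` A \<subseteq> {1..n}"
  by (auto simp: tau_def)
lemma tau_card: "card (tau ` A) = card A" using inj_tau by (simp add: card_image inj_on_subset)
lemma tau_fix: "(1 \<in> A \<longleftrightarrow> 2 \<in> A) \<Longrightarrow> tau ` A = A"
proof -
  assume h: "1 \<in> A \<longleftrightarrow> 2 \<in> A"
  show "tau ` A = A"
  proof (rule set_eqI)
    fix x show "x \<in> tau ` A \<longleftrightarrow> x \<in> A" unfolding tau_mem using h by (auto simp: tau_def)
  qed
qed

definition gsw :: "nat set + nat set \<Rightarrow> nat set + nat set" where
  "gsw v = (case v of Inl A \<Rightarrow> Inl (tau ` A) | Inr B \<Rightarrow> Inr (tau ` B))"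

lemma gsw_gsw[simp]: "gsw (gsw v) = v" by (cases v) (auto simp: gsw_def)

lemma same3: "(x::nat) < 2 \<Longrightarrow> y < 2 \<Longrightarrow> z < 2 \<Longrightarrow> x \<noteq> z \<Longrightarrow> y \<noteq> z \<Longrightarrow> x = y" by arith

lemma lower:
  assumes k2: "2 \<le> k" and kn: "k \<le> n"
    and c2: "c ` LG1_V k n \<subseteq> {..<2}" and pr: "proper_coloring (LG1_V k n) LG1_E c"
  shows "\<not> distinguishing (LG1_V k n) LG1_E c"
proof -
  let ?V = "LG1_V k n"
  have n2: "2 \<le> n" using k2 kn by simp
  have gV: "gsw v \<in> ?V" if "v \<in> ?V" for v
  proof (cases v)
    case (Inl A) then show ?thesis using that tau_range[OF n2] tau_card by (auto simp: gsw_def memL)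
  next
    case (Inr B) then show ?thesis using that tau_range[OF n2] tau_card by (auto simp: gsw_def memR)
  qed
  have bij: "bij_betw gsw ?V ?V" by (rule bij_betw_byWitness[of _ gsw]) (auto simp: gV)
  have psub: "tau ` A \<subset> tau ` B \<longleftrightarrow> A \<subset> B" for A B
    using inj_image_subset_iff[OF inj_tau] inj_image_eq_iff[OF inj_tau] by blast
  have adjE: "LG1_E (gsw u) (gsw v) = LG1_E u v" for u v
    by (cases u; cases v) (auto simp: gsw_def psub)
  have auto: "is_automorphism ?V LG1_E gsw" unfolding is_automorphism_def using bij adjE by simp
  have cv: "\<And>v. v \<in> ?V \<Longrightarrow> c v < 2" using c2 by auto
  have adjc: "c u \<noteq> c v" if "u \<in> ?V" "v \<in> ?V" "LG1_E u v" for u v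
    using pr that unfolding proper_coloring_def by blast
  have col: "c (gsw v) = c v" if v: "v \<in> ?V" for v
  proof (cases v)
    case (Inl A)
    have A: "A \<subseteq> {1..n}" "card A = k - 1" using v Inl by (auto simp: memL)
    show ?thesis
    proof (cases "1 \<in> A \<longleftrightarrow> 2 \<in> A")
      case True then show ?thesis using Inl tau_fix by (simp add: gsw_def)
    next
      case False
      obtain m where m: "m \<in> {1,2}" "m \<notin> A" "A \<union> {1,2} = insert m A" using False by blast
      let ?B = "A \<union> {1,2}"
      have finA: "finite A" using A by (meson finite_atLeastAtMost finite_subset)
      have cB: "card ?B = k" using m finA A k2 by simp
      have BV: "Inr ?B \<in> ?V" using A n2 cB by (auto simp: memR)
      have sub1: "A \<subset> ?B" using m by auto
      have "tau ` A \<subseteq> ?B" by (auto simp: tau_def)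
      moreover have "tau ` A \<noteq> ?B" using tau_card[of A] cB A k2 by auto
      ultimately have sub2: "tau ` A \<subset> ?B" by auto
      have gv: "gsw v = Inl (tau ` A)" using Inl by (simp add: gsw_def)
      have "c v \<noteq> c (Inr ?B)" using adjc[OF v BV] Inl sub1 by simp
      moreover have "c (gsw v) \<noteq> c (Inr ?B)" using adjc[OF gV[OF v] BV] gv sub2 by simp
      ultimately show ?thesis using same3 cv v gV BV by metis
    qed
  next
    case (Inr B)
    have B: "B \<subseteq> {1..n}" "card B = k" using v Inr by (auto simp: memR)
    show ?thesis
    proof (cases "1 \<in> B \<longleftrightarrow> 2 \<in> B")
      case True then show ?thesis using Inr tau_fix by (simp add: gsw_def)
    next
      case False
      obtain m where m: "m \<in> {1,2}" "m \<in> B" "B - {1,2} = B - {m}" using False by blast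
      let ?A = "B - {1,2}"
      have finB: "finite B" using B by (meson finite_atLeastAtMost finite_subset)
      have cA: "card ?A = k - 1" using m finB B by (simp add: card_Diff_singleton)
      have AV: "Inl ?A \<in> ?V" using B cA by (auto simp: memL)
      have sub1: "?A \<subset> B" using m by auto
      have "?A \<subseteq> tau ` B" unfolding tau_mem by (auto simp: tau_def)
      moreover have "?A \<noteq> tau ` B" using tau_card[of B] cA B k2 by auto
      ultimately have sub2: "?A \<subset> tau ` B" by auto
      have gv: "gsw v = Inr (tau ` B)" using Inr by (simp add: gsw_def)
      have "c (Inl ?A) \<noteq> c v" using adjc[OF AV v] Inr sub1 by simp
      moreover have "c (Inl ?A) \<noteq> c (gsw v)" using adjc[OF AV gV[OF v]] gv sub2 by simp
      ultimately show ?thesis using same3 cv v gV AV by metis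
    qed
  qed
  have cls: "gsw ` {v \<in> ?V. c v = i} = {v \<in> ?V. c v = i}" for i
  proof
    show "gsw ` {v \<in> ?V. c v = i} \<subseteq> {v \<in> ?V. c v = i}" using gV col by auto
    show "{v \<in> ?V. c v = i} \<subseteq> gsw ` {v \<in> ?V. c v = i}"
    proof
      fix v assume "v \<in> {v \<in> ?V. c v = i}"
      then have "gsw v \<in> {v \<in> ?V. c v = i}" using gV col by auto
      then show "v \<in> gsw ` {v \<in> ?V. c v = i}" by (metis gsw_gsw imageI)
    qed
  qed
  let ?A0 = "insert 1 {3..k}"
  have cA0: "card ?A0 = k - 1" using k2 by simp
  have A0V: "Inl ?A0 \<in> ?V" using cA0 kn by (auto simp: memL)
  have "1 \<notin> tau ` ?A0" unfolding tau_mem by (simp add: tau_def)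
  then have "gsw (Inl ?A0) \<noteq> Inl ?A0" by (auto simp: gsw_def)
  then show ?thesis unfolding distinguishing_def using auto cls A0V by blast
qed



definition colr :: "nat \<Rightarrow> nat \<Rightarrow> nat set + nat set \<Rightarrow> nat" where
  "colr N t v = (case v of Inl A \<Rightarrow> 2 | Inr B \<Rightarrow> if inH N t B then 1 else 0)"

lemma upper:
  assumes bs: "base N t"
  shows "\<exists>c. c ` LG1_V (t+2) (N+t) \<subseteq> {..<3} \<and> proper_coloring (LG1_V (t+2) (N+t)) LG1_E c
             \<and> distinguishing (LG1_V (t+2) (N+t)) LG1_E c"
proof (intro exI conjI)
  let ?V = "LG1_V (t+2) (N+t)" and ?c = "colr N t"
  show "?c ` ?V \<subseteq> {..<3}" by (auto simp: colr_def split: sum.splits)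
  show "proper_coloring ?V LG1_E ?c" unfolding proper_coloring_def
  proof (intro ballI impI)
    fix u v assume "LG1_E u v" then show "?c u \<noteq> ?c v"
      by (cases u; cases v) (auto simp: colr_def)
  qed
  have mL: "Inl A \<in> ?V \<longleftrightarrow> LS N t A" for A by (simp add: memL LS_def)
  have mR: "Inr B \<in> ?V \<longleftrightarrow> RS N t B" for B by (simp add: memR RS_def)
  show "distinguishing ?V LG1_E ?c" unfolding distinguishing_def
  proof (intro allI impI)
    fix f assume fa: "is_automorphism ?V LG1_E f \<and> (\<forall>i. f ` {v \<in> ?V. ?c v = i} = {v \<in> ?V. ?c v = i})"
    have bij: "bij_betw f ?V ?V" and fadj: "\<And>u v. u \<in> ?V \<Longrightarrow> v \<in> ?V \<Longrightarrow> LG1_E (f u) (f v) = LG1_E u v"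
      using fa unfolding is_automorphism_def by auto
    have fV: "f v \<in> ?V \<and> ?c (f v) = ?c v" if v: "v \<in> ?V" for v
    proof -
      have "f v \<in> f ` {w \<in> ?V. ?c w = ?c v}" using v by blast
      then show ?thesis using fa by blast
    qed
    have injf: "inj_on f ?V" using bij by (simp add: bij_betw_def)
    have imgf: "f ` ?V = ?V" using bij by (simp add: bij_betw_def)
    define fL where "fL A = projl (f (Inl A))" for A
    define fR where "fR B = projr (f (Inr B))" for B
    have fLeq: "f (Inl A) = Inl (fL A) \<and> LS N t (fL A)" if A: "LS N t A" for A
    proof -
      have h: "f (Inl A) \<in> ?V" "?c (f (Inl A)) = 2" using fV[of "Inl A"] A mL by (auto simp: colr_def)
      show ?thesis
      proof (cases "f (Inl A)")
        case (Inl A') then show ?thesis using h mL by (simp add: fL_def)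
      next
        case (Inr B') then show ?thesis using h by (simp add: colr_def split: if_splits)
      qed
    qed
    have fReq: "f (Inr B) = Inr (fR B) \<and> RS N t (fR B) \<and> (inH N t (fR B) \<longleftrightarrow> inH N t B)" if B: "RS N t B" for B
    proof -
      have h: "f (Inr B) \<in> ?V" "?c (f (Inr B)) = ?c (Inr B)" using fV[of "Inr B"] B mR by auto
      show ?thesis
      proof (cases "f (Inr B)")
        case (Inl A') then show ?thesis using h by (simp add: colr_def split: if_splits)
      next
        case (Inr B') then show ?thesis using h mR by (simp add: fR_def colr_def split: if_splits)
      qed
    qed
    have psub: "A \<subset> B \<longleftrightarrow> A \<subseteq> B" if "LS N t A" "RS N t B" for A B
      using that unfolding LS_def RS_def by auto
    have rg: "rig N t fL fR"
    proof (rule rig.intro[OF bs], rule rig_axioms.intro)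
      show "LS N t (fL A)" if "LS N t A" for A using fLeq that by blast
      show "A = A'" if "LS N t A" "LS N t A'" "fL A = fL A'" for A A'
      proof -
        have "f (Inl A) = f (Inl A')" using fLeq that by metis
        then have "(Inl A :: nat set + nat set) = Inl A'" by (rule inj_onD[OF injf]) (use that mL in auto)
        then show ?thesis by simp
      qed
      show "\<exists>A. LS N t A \<and> fL A = A'" if "LS N t A'" for A'
      proof -
        have "Inl A' \<in> f ` ?V" using imgf that mL by simp
        then obtain v where v: "v \<in> ?V" "f v = Inl A'" by (metis imageE)
        show ?thesis
        proof (cases v)
          case (Inl A) then show ?thesis using v fLeq mL by force
        next
          case (Inr B) then show ?thesis using v fReq mR by force
        qed
      qed
      show "RS N t (fR B)" if "RS N t B" for B using fReq that by blast
      show "B = B'" if "RS N t B" "RS N t B'" "fR B = fR B'" for B B'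
      proof -
        have "f (Inr B) = f (Inr B')" using fReq that by metis
        then have "(Inr B :: nat set + nat set) = Inr B'" by (rule inj_onD[OF injf]) (use that mR in auto)
        then show ?thesis by simp
      qed
      show "\<exists>B. RS N t B \<and> fR B = B'" if "RS N t B'" for B'
      proof -
        have "Inr B' \<in> f ` ?V" using imgf that mR by simp
        then obtain v where v: "v \<in> ?V" "f v = Inr B'" by (metis imageE)
        show ?thesis
        proof (cases v)
          case (Inl A) then show ?thesis using v fLeq mL by force
        next
          case (Inr B) then show ?thesis using v fReq mR by force
        qed
      qed
      show "fL A \<subseteq> fR B \<longleftrightarrow> A \<subseteq> B" if "LS N t A" "RS N t B" for A B
      proof -
        have "LG1_E (f (Inl A)) (f (Inr B)) = LG1_E (Inl A) (Inr B)" using fadj that mL mR by blast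
        then have "fL A \<subset> fR B \<longleftrightarrow> A \<subset> B" using fLeq fReq that by simp
        then show ?thesis using psub that fLeq fReq by metis
      qed
      show "inH N t (fR B) \<longleftrightarrow> inH N t B" if "RS N t B" for B using fReq that by blast
    qed
    show "\<forall>v\<in>?V. f v = v"
    proof
      fix v assume v: "v \<in> ?V"
      show "f v = v"
      proof (cases v)
        case (Inl A) then show ?thesis using v mL fLeq rig.allL[OF rg] by auto
      next
        case (Inr B) then show ?thesis using v mR fReq rig.allR[OF rg] by auto
      qed
    qed
  qed
qed

theorem mainTheorem4:
  fixes k n :: nat
  assumes "k \<ge> 2"
    and "n \<ge> (if k = 2 then 6 else 2 * k + 1)"
  shows "chi_D (LG1_V k n) LG1_E = 3"
proof -
  define t where "t = k - 2"
  define N where "N = n - t"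
  have kt: "k = t + 2" using assms(1) t_def by simp
  have nN: "n = N + t" and N6: "6 \<le> N" and tN: "t + 5 \<le> N"
    using assms unfolding N_def t_def by (auto split: if_splits)
  have bs: "base N t" using N6 tN by (rule base.intro)
  have kn: "k \<le> n" using assms by (auto split: if_splits)
  let ?P = "\<lambda>m. \<exists>c. c ` LG1_V k n \<subseteq> {..<m} \<and> proper_coloring (LG1_V k n) LG1_E c \<and> distinguishing (LG1_V k n) LG1_E c"
  have P3: "?P 3" using upper[OF bs] kt nN by simp
  have ge: "3 \<le> m" if "?P m" for m
  proof (rule ccontr)
    assume "\<not> 3 \<le> m"
    then have "m \<le> 2" by simp
    from that obtain c where c: "c ` LG1_V k n \<subseteq> {..<m}" "proper_coloring (LG1_V k n) LG1_E c"
      "distinguishing (LG1_V k n) LG1_E c" by blast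
    have "c ` LG1_V k n \<subseteq> {..<2}" using c(1) \<open>m \<le> 2\<close> by auto
    then show False using lower[OF assms(1) kn _ c(2)] c(3) by blast
  qed
  show ?thesis unfolding chi_D_def by (rule Least_equality[of ?P, OF P3 ge])
qed

end
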